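(* Let $A$ be a closed solid convex set in $\mathbb{R}^n$ with $\mathcal{C}^2$ smooth boundary around $\bar x\in\operatorname{bd}A$. Then there exists $\delta>0$ such that for all $x$ with $\|x-\bar x\|\le\delta$ and $x\notin A$, $$\Pi_A^\alpha x\in\operatorname{int}A\quad\text{for all }\alpha\in(1,2].$$
   Context: Solid means $\operatorname{int}A\neq\emptyset$. $\Pi_A$ is the projection onto $A$ and $\Pi_A^\alpha:=(1-\alpha)I+\alpha\Pi_A$. $A$ has $\mathcal{C}^2$ smooth boundary around $\bar x$ if $\operatorname{bd}A$ is a $\mathcal{C}^2$ manifold around $\bar x$, i.e. there is an open $U\ni\bar x$ with $\operatorname{bd}A\cap U=\{y:F(y)=0\}$ for a $\mathcal{C}^2$ map $F$ with surjective derivative throughout $U$. *)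

theory Defs
  imports "HOL-Analysis.Analysis"
begin

text \<open>Projection onto A (for closed convex nonempty A in a Euclidean space the
  library's closest_point is the metric projection) and its relaxation.\<close>
definition proj :: "'a::euclidean_space set \<Rightarrow> 'a \<Rightarrow> 'a" where
  "proj A x = closest_point A x"

definition relaxed_proj :: "real \<Rightarrow> 'a::euclidean_space set \<Rightarrow> 'a \<Rightarrow> 'a" where
  "relaxed_proj \<alpha> A x = (1 - \<alpha>) *\<^sub>R x + \<alpha> *\<^sub>R proj A x"

definition C2_on :: "'a::euclidean_space set \<Rightarrow> ('a \<Rightarrow> 'b::euclidean_space) \<Rightarrow> bool" where
  "C2_on U F \<longleftrightarrow> (\<exists>F' :: 'a \<Rightarrow> ('a \<Rightarrow>\<^sub>L 'b). \<exists>F'' :: 'a \<Rightarrow> ('a \<Rightarrow>\<^sub>L ('a \<Rightarrow>\<^sub>L 'b)).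
      (\<forall>y\<in>U. (F has_derivative blinfun_apply (F' y)) (at y)) \<and>
      (\<forall>y\<in>U. (F' has_derivative blinfun_apply (F'' y)) (at y)) \<and>
      continuous_on U F'')"

text \<open>The codomain R^m is the type variable 'b.\<close>
definition C2_smooth_boundary_at :: "'a::euclidean_space set \<Rightarrow> 'a \<Rightarrow> ('b::euclidean_space) itself \<Rightarrow> bool" where
  "C2_smooth_boundary_at A xbar _ \<longleftrightarrow> (\<exists>U. \<exists>F :: 'a \<Rightarrow> 'b. open U \<and> xbar \<in> U \<and> C2_on U F \<and>
      (\<forall>y\<in>U. F differentiable (at y) \<and> surj (frechet_derivative F (at y))) \<and>
      frontier A \<inter> U = {y\<in>U. F y = 0})"

end

theory Submission
  imports Defs
begin

lemma line_deriv:
  fixes f :: "'a::euclidean_space \<Rightarrow> real"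
  assumes "(f has_derivative f') (at (y + t *\<^sub>R v))"
  shows "((\<lambda>s. f (y + s *\<^sub>R v)) has_real_derivative f' v) (at t)"
proof -
  have l: "linear f'" using assms has_derivative_linear by blast
  have "((\<lambda>s. y + s *\<^sub>R v) has_derivative (\<lambda>h. h *\<^sub>R v)) (at t)"
    by (auto intro!: derivative_eq_intros)
  from has_derivative_compose[OF this assms]
  have "((\<lambda>s. f (y + s *\<^sub>R v)) has_derivative (\<lambda>h. f' (h *\<^sub>R v))) (at t)" .
  then show ?thesis
    by (rule has_derivative_imp_has_field_derivative) (simp add: linear_scale[OF l])
qed

lemma seg_in_ball:
  fixes y :: "'a::euclidean_space"
  assumes y: "y \<in> ball a r" and ys: "y + s *\<^sub>R v \<in> ball a r" and "0 \<le> t" "t \<le> s"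
  shows "y + t *\<^sub>R v \<in> ball a r"
proof (cases "s = 0")
  case True then show ?thesis using assms by simp
next
  case False
  then have sp: "s > 0" using assms by simp
  let ?u = "t / s"
  have "(1 - ?u) *\<^sub>R y + ?u *\<^sub>R (y + s *\<^sub>R v) \<in> ball a r"
    by (rule convexD_alt[OF convex_ball y ys]) (use assms sp in auto)
  moreover have "(1 - ?u) *\<^sub>R y + ?u *\<^sub>R (y + s *\<^sub>R v) = y + t *\<^sub>R v"
    using sp by (simp add: algebra_simps)
  ultimately show ?thesis by simp
qed

lemma mono_dir:
  fixes f :: "'a::euclidean_space \<Rightarrow> real"
  assumes der: "\<forall>z\<in>ball a r. (f has_derivative f' z) (at z)"
    and slope: "\<forall>z\<in>ball a r. f' z v \<ge> c"
    and y: "y \<in> ball a r" and ys: "y + s *\<^sub>R v \<in> ball a r" and s: "s \<ge> 0"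
  shows "f (y + s *\<^sub>R v) \<ge> f y + c * s"
proof -
  let ?g = "\<lambda>t. f (y + t *\<^sub>R v) - c * t"
  have "?g 0 \<le> ?g s"
  proof (rule DERIV_nonneg_imp_nondecreasing[OF s])
    fix t assume t: "0 \<le> t" "t \<le> s"
    have yt: "y + t *\<^sub>R v \<in> ball a r" by (rule seg_in_ball[OF y ys t])
    have "(?g has_real_derivative (f' (y + t *\<^sub>R v) v - c)) (at t)"
      by (rule derivative_eq_intros line_deriv der[rule_format, OF yt])+ auto
    then show "\<exists>l. (?g has_real_derivative l) (at t) \<and> l \<ge> 0"
      using slope yt by force
  qed
  then show ?thesis by simp
qed
lemma conn_no_frontier:
  assumes "connected S" "S \<inter> frontier A = {}" "a \<in> S" "b \<in> S" "a \<in> interior A" "closed A"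
  shows "b \<in> interior A"
proof -
  have "S \<inter> A \<noteq> {}" using assms interior_subset by blast
  then have "S - A = {}" using connected_Int_frontier[OF assms(1)] assms(2) by blast
  then have "b \<in> A" using assms by blast
  moreover have "b \<notin> frontier A" using assms by blast
  ultimately show ?thesis using assms(6) by (simp add: frontier_def)
qed

lemma up_claim:
  fixes f :: "'a::euclidean_space \<Rightarrow> real"
  assumes der: "\<forall>z\<in>ball xb r. (f has_derivative f' z) (at z)"
    and slope: "\<forall>z\<in>ball xb r. f' z v \<ge> c" and c: "c > 0"
    and fr: "\<forall>z\<in>ball xb r. z \<in> frontier A \<longrightarrow> f z = 0"
    and clA: "closed A"
    and s: "s \<ge> 0" "norm (s *\<^sub>R v) \<le> r/2"
    and r1: "r1 \<le> r/2" and small: "\<forall>z\<in>ball xb r1. \<bar>f z\<bar> < c * s"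
    and y: "y \<in> ball xb r1" and fy: "f y > 0"
  shows "y \<in> interior A \<longleftrightarrow> xb + s *\<^sub>R v \<in> interior A"
proof -
  have inb: "w + t *\<^sub>R v \<in> ball xb r" if "w \<in> ball xb r1" "0 \<le> t" "t \<le> s" for w t
  proof -
    have a: "norm (t *\<^sub>R v) \<le> norm (s *\<^sub>R v)" using that by (simp add: mult_right_mono)
    have "norm (xb - (w + t *\<^sub>R v)) = norm ((xb - w) - t *\<^sub>R v)" by (simp add: algebra_simps)
    also have "\<dots> \<le> norm (xb - w) + norm (t *\<^sub>R v)" by (rule norm_triangle_ineq4)
    finally have "dist xb (w + t *\<^sub>R v) \<le> dist xb w + norm (t *\<^sub>R v)" by (simp add: dist_norm)
    moreover have "dist xb w < r1" using that(1) by simp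
    ultimately show ?thesis using a s r1 by simp
  qed
  have yr: "y \<in> ball xb r" using y r1 inb[OF y, of 0] s by simp
  define S1 where "S1 = closed_segment y (y + s *\<^sub>R v)"
  define S2 where "S2 = closed_segment (y + s *\<^sub>R v) (xb + s *\<^sub>R v)"
  have nf: "z \<notin> frontier A" if "z \<in> ball xb r" "f z \<noteq> 0" for z
    using fr that by blast
  have S1f: "S1 \<inter> frontier A = {}"
  proof (rule ccontr)
    assume "S1 \<inter> frontier A \<noteq> {}"
    then obtain z where z: "z \<in> S1" "z \<in> frontier A" by blast
    then obtain u where u: "0 \<le> u" "u \<le> 1" "z = (1 - u) *\<^sub>R y + u *\<^sub>R (y + s *\<^sub>R v)"
      unfolding S1_def in_segment by blast
    have zz: "z = y + (u * s) *\<^sub>R v" using u by (simp add: algebra_simps)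
    have us: "0 \<le> u * s" "u * s \<le> s" using u s by (auto simp: mult_left_le_one_le)
    have zb: "z \<in> ball xb r" using inb[OF y us] zz by simp
    have "f z \<ge> f y + c * (u * s)"
      using mono_dir[OF der slope yr, of "u * s"] zb zz us by simp
    moreover have "c * (u * s) \<ge> 0" using c us by simp
    ultimately have "f z \<noteq> 0" using fy by linarith
    then show False using nf zb z by blast
  qed
  have S2f: "S2 \<inter> frontier A = {}"
  proof (rule ccontr)
    assume "S2 \<inter> frontier A \<noteq> {}"
    then obtain z where z: "z \<in> S2" "z \<in> frontier A" by blast
    then obtain u where u: "0 \<le> u" "u \<le> 1" "z = (1 - u) *\<^sub>R (y + s *\<^sub>R v) + u *\<^sub>R (xb + s *\<^sub>R v)"
      unfolding S2_def in_segment by blast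
    define w where "w = (1 - u) *\<^sub>R y + u *\<^sub>R xb"
    have zz: "z = w + s *\<^sub>R v" using u by (simp add: algebra_simps w_def)
    have w: "w \<in> ball xb r1" unfolding w_def
      by (rule convexD_alt[OF convex_ball y]) (use u y r1 s in \<open>auto intro: le_less_trans[OF zero_le_dist]\<close>)
    have wr: "w \<in> ball xb r" using inb[OF w, of 0] s by simp
    have zb: "z \<in> ball xb r" using inb[OF w, of s] zz s by simp
    have "f z \<ge> f w + c * s"
      using mono_dir[OF der slope wr, of s] zb zz s by simp
    moreover have "\<bar>f w\<bar> < c * s" using small w by blast
    ultimately have "f z \<noteq> 0" by linarith
    then show False using nf zb z by blast
  qed
  define S where "S = S1 \<union> S2"
  have Sc: "connected S" unfolding S_def S1_def S2_def
    by (rule connected_Un) (auto intro: connected_segment)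
  have Sf: "S \<inter> frontier A = {}" using S1f S2f S_def by blast
  have yS: "y \<in> S" and tS: "xb + s *\<^sub>R v \<in> S" unfolding S_def S1_def S2_def by auto
  show ?thesis using conn_no_frontier[OF Sc Sf yS tS _ clA] conn_no_frontier[OF Sc Sf tS yS _ clA]
    by blast
qed
lemma dichotomy:
  fixes f :: "'a::euclidean_space \<Rightarrow> real"
  assumes der: "\<forall>z\<in>ball xb r. (f has_derivative f' z) (at z)"
    and slope: "\<forall>z\<in>ball xb r. f' z v \<ge> c" and c: "c > 0"
    and fr: "\<forall>z\<in>ball xb r. z \<in> frontier A \<longrightarrow> f z = 0"
    and clA: "closed A" and cvA: "convex A" and intA: "interior A \<noteq> {}"
    and xbf: "xb \<in> frontier A" and r: "r > 0"
  shows "\<exists>r1>0. r1 \<le> r/2 \<and> ((\<forall>y\<in>ball xb r1. f y > 0 \<longrightarrow> y \<in> interior A) \<or>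
                              (\<forall>y\<in>ball xb r1. f y < 0 \<longrightarrow> y \<in> interior A))"
proof -
  have xbr: "xb \<in> ball xb r" using r by simp
  have lin: "linear (f' xb)" using der xbr has_derivative_linear by blast
  have v: "v \<noteq> 0"
  proof
    assume "v = 0"
    then have "f' xb v = 0" using lin linear_0 by blast
    moreover have "c \<le> f' xb v" using slope xbr by blast
    ultimately show False using c by linarith
  qed
  define s where "s = r / (2 * norm v)"
  have sp: "s > 0" using r v by (simp add: s_def)
  have ns: "norm (s *\<^sub>R v) = r/2" using v sp r by (simp add: s_def)
  have ns': "norm (s *\<^sub>R (- v)) \<le> r/2" using ns by simp
  have f0: "f xb = 0" using fr xbr xbf by blast
  have "continuous (at xb) f" using der xbr has_derivative_continuous by blast
  then obtain r1' where r1': "r1' > 0" "\<forall>z. dist z xb < r1' \<longrightarrow> dist (f z) (f xb) < c * s"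
    unfolding continuous_at_eps_delta using c sp by (meson mult_pos_pos)
  define r1 where "r1 = min r1' (r/2)"
  have r1p: "r1 > 0" "r1 \<le> r/2" using r1' r by (auto simp: r1_def)
  have small: "\<forall>z\<in>ball xb r1. \<bar>f z\<bar> < c * s"
    using r1' f0 by (auto simp: r1_def dist_commute dist_real_def)
  have small': "\<forall>z\<in>ball xb r1. \<bar>- f z\<bar> < c * s" using small by simp
  have der': "\<forall>z\<in>ball xb r. ((\<lambda>x. - f x) has_derivative (\<lambda>w. - f' z w)) (at z)"
    using der by (auto intro: has_derivative_minus)
  have slope': "\<forall>z\<in>ball xb r. - f' z (- v) \<ge> c"
  proof
    fix z assume z: "z \<in> ball xb r"
    have "linear (f' z)" using der z has_derivative_linear by blast
    then have "f' z (- v) = - f' z v" using linear_neg by blast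
    then show "- f' z (- v) \<ge> c" using slope z by simp
  qed
  have fr': "\<forall>z\<in>ball xb r. z \<in> frontier A \<longrightarrow> - f z = 0" using fr by simp
  note down = up_claim[OF der' slope' c fr' clA less_imp_le[OF sp] ns' r1p(2) small']
  have U: "y \<in> interior A \<longleftrightarrow> xb + s *\<^sub>R v \<in> interior A" if "y \<in> ball xb r1" "f y > 0" for y
    using up_claim[OF der slope c fr clA less_imp_le[OF sp] _ r1p(2) small that] ns by simp
  have D: "y \<in> interior A \<longleftrightarrow> xb + s *\<^sub>R (- v) \<in> interior A" if "y \<in> ball xb r1" "f y < 0" for y
    using down that by simp
  show ?thesis
  proof (cases "xb + s *\<^sub>R v \<in> interior A")
    case True
    then show ?thesis using U r1p by blast
  next
    case nT: False
    show ?thesis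
    proof (cases "xb + s *\<^sub>R (- v) \<in> interior A")
      case True
      then show ?thesis using D r1p by blast
    next
      case nB: False
      have "xb \<in> closure (interior A)"
        using convex_closure_interior[OF cvA intA] xbf by (simp add: frontier_def)
      then obtain a where a: "a \<in> interior A" "dist a xb < r1/2"
        using r1p unfolding closure_approachable by (meson half_gt_zero)
      obtain e where e: "e > 0" "ball a e \<subseteq> interior A"
        using a(1) open_contains_ball open_interior by blast
      define t where "t = min e (r1/2) / (2 * norm v)"
      have tp: "t > 0" using e r1p v by (simp add: t_def)
      have nt: "norm (t *\<^sub>R v) < min e (r1/2)" using v tp e r1p by (auto simp: t_def min_def)
      have ab: "a \<in> ball xb r1" using a r1p by (simp add: dist_commute)
      have a'1: "a + t *\<^sub>R v \<in> interior A" using e nt by (auto simp: dist_norm)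
      have a'b: "a + t *\<^sub>R v \<in> ball xb r1"
      proof -
        have "dist xb (a + t *\<^sub>R v) \<le> dist xb a + norm (t *\<^sub>R v)"
          by (metis dist_commute dist_norm dist_triangle2 add_diff_cancel_left')
        then show ?thesis using a nt by (simp add: dist_commute)
      qed
      have fa: "f a = 0"
      proof (rule ccontr)
        assume "f a \<noteq> 0"
        then have "f a > 0 \<or> f a < 0" by linarith
        then show False using U[OF ab] D[OF ab] a nT nB by blast
      qed
      have abr: "a \<in> ball xb r" "a + t *\<^sub>R v \<in> ball xb r" using ab a'b r1p by auto
      have "f (a + t *\<^sub>R v) \<ge> f a + c * t" using mono_dir[OF der slope abr] tp by simp
      then have "f (a + t *\<^sub>R v) > 0" using fa mult_pos_pos[OF c tp] by linarith
      then show ?thesis using U[OF a'b] a'1 nT by blast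
    qed
  qed
qed
lemma lin_halfspace:
  fixes n :: "'a::euclidean_space"
  assumes lin: "linear l" and hs: "\<forall>w. l w > 0 \<longrightarrow> inner w n \<ge> 0" and n: "norm n = 1"
  shows "\<forall>w. l w = inner w n * l n" and "l n \<ge> 0"
proof -
  have nn: "inner n n = 1" using n by (simp add: dot_square_norm)
  have perp: "l w = 0" if w: "inner w n = 0" for w
  proof -
    have le: "l u \<le> 0" if u: "inner u n = 0" for u
    proof (rule ccontr)
      assume "\<not> l u \<le> 0"
      then have lu: "l u > 0" by simp
      define e where "e = l u / (2 * (\<bar>l n\<bar> + 1))"
      have ep: "e > 0" using lu by (simp add: e_def)
      have "e * \<bar>l n\<bar> < l u"
      proof -
        have "e * \<bar>l n\<bar> \<le> e * (\<bar>l n\<bar> + 1)" using ep by simp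
        also have "\<dots> = l u / 2" unfolding e_def by (simp add: field_simps)
        finally show ?thesis using lu by simp
      qed
      moreover have "e * l n \<le> e * \<bar>l n\<bar>" using ep by (simp add: mult_left_mono)
      moreover have "l (u - e *\<^sub>R n) = l u - e * l n"
        using linear_diff[OF lin] linear_scale[OF lin] by simp
      ultimately have "l (u - e *\<^sub>R n) > 0" by linarith
      then have "inner (u - e *\<^sub>R n) n \<ge> 0" using hs by blast
      then show False using u nn ep by (simp add: inner_diff_left)
    qed
    have "l w \<le> 0" using le w by blast
    moreover have "l (- w) \<le> 0" using le w by simp
    ultimately show ?thesis using linear_neg[OF lin, of w] by simp
  qed
  show "\<forall>w. l w = inner w n * l n"
  proof
    fix w
    have "inner (w - inner w n *\<^sub>R n) n = 0" using nn by (simp add: inner_diff_left)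
    then have "l (w - inner w n *\<^sub>R n) = 0" by (rule perp)
    then show "l w = inner w n * l n"
      using linear_diff[OF lin] linear_scale[OF lin] by simp
  qed
  show "l n \<ge> 0"
  proof (rule ccontr)
    assume "\<not> l n \<ge> 0"
    then have "l (- n) > 0" using linear_neg[OF lin, of n] by simp
    then have "inner (- n) n \<ge> 0" using hs by blast
    then show False using nn by simp
  qed
qed
lemma final:
  fixes f :: "'a::euclidean_space \<Rightarrow> real"
  assumes der: "\<forall>z\<in>ball xb r. (f has_derivative f' z) (at z)"
    and near: "\<forall>z\<in>ball xb r. \<forall>w. \<bar>f' z w - f' xb w\<bar> \<le> \<eta> * norm w"
    and v0: "f' xb v0 = 1" and eta: "\<eta> > 0" "\<eta> * norm v0 \<le> 1/8"
    and fr: "\<forall>z\<in>ball xb r. z \<in> frontier A \<longrightarrow> f z = 0"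
    and clA: "closed A" and cvA: "convex A" and xbf: "xb \<in> frontier A"
    and r1: "r1 > 0" "r1 \<le> r" and pos: "\<forall>y\<in>ball xb r1. f y > 0 \<longrightarrow> y \<in> interior A"
  shows "\<exists>\<delta>>0. \<forall>x. norm (x - xb) \<le> \<delta> \<and> x \<notin> A \<longrightarrow>
           (\<forall>\<alpha>. 1 < \<alpha> \<and> \<alpha> \<le> 2 \<longrightarrow> (1 - \<alpha>) *\<^sub>R x + \<alpha> *\<^sub>R closest_point A x \<in> interior A)"
proof (intro exI[of _ "r1/3"] conjI allI impI)
  show "r1/3 > 0" using r1 by simp
  fix x and \<alpha> :: real
  assume x: "norm (x - xb) \<le> r1/3 \<and> x \<notin> A" and al: "1 < \<alpha> \<and> \<alpha> \<le> 2"
  have xbA: "xb \<in> A" using xbf clA by (simp add: frontier_def)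
  have Ane: "A \<noteq> {}" using xbA by blast
  define p where "p = closest_point A x"
  have pA: "p \<in> A" unfolding p_def using closest_point_in_set[OF clA Ane] .
  have dot: "\<forall>y\<in>A. inner (x - p) (y - p) \<le> 0" unfolding p_def using closest_point_dot[OF cvA clA] by blast
  have dxp: "dist x p \<le> dist x xb" unfolding p_def using closest_point_le[OF clA xbA] .
  have dpx: "dist p xb \<le> dist x xb"
    using closest_point_lipschitz[OF cvA clA Ane, of x xb] closest_point_self[OF xbA] by (simp add: p_def)
  have xd: "dist x xb \<le> r1/3" using x by (simp add: dist_norm)
  have xp: "x \<noteq> p" using x pA by blast
  define d where "d = norm (x - p)"
  have dp: "d > 0" using xp by (simp add: d_def)
  have dle: "d \<le> r1/3" using dxp xd by (simp add: d_def dist_norm)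
  define n where "n = (1/d) *\<^sub>R (p - x)"
  have nn: "norm n = 1" using dp by (simp add: n_def d_def norm_minus_commute)
  have nrm: "\<forall>y\<in>A. inner (y - p) n \<ge> 0"
  proof
    fix y assume "y \<in> A"
    then have "inner (x - p) (y - p) \<le> 0" using dot by blast
    moreover have "inner (y - p) (p - x) = - inner (x - p) (y - p)"
    proof -
      have "p - x = - (x - p)" by simp
      then show ?thesis by (simp only: inner_minus_right inner_commute[of "y - p" "x - p"])
    qed
    ultimately have "inner (y - p) (p - x) \<ge> 0" by linarith
    then show "inner (y - p) n \<ge> 0" using dp by (simp add: n_def)
  qed
  have pfr: "p \<in> frontier A"
  proof -
    have "p \<notin> interior A"
    proof
      assume "p \<in> interior A"
      then obtain e where e: "e > 0" "ball p e \<subseteq> A" unfolding mem_interior by blast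
      have "p - (e/2) *\<^sub>R n \<in> ball p e" using e nn by (simp add: dist_norm)
      then have "inner ((p - (e/2) *\<^sub>R n) - p) n \<ge> 0" using e nrm by blast
      moreover have "inner n n = 1" using nn by (simp add: dot_square_norm)
      ultimately show False using e by simp
    qed
    then show ?thesis using pA clA by (simp add: frontier_def)
  qed
  have pb1: "p \<in> ball xb r1" using dpx xd r1 by (simp add: dist_commute)
  have pb: "p \<in> ball xb r" using pb1 r1 by auto
  have fp: "f p = 0" using fr pb pfr by blast
  have linp: "linear (f' p)" using der pb has_derivative_linear by blast
  have hs: "\<forall>w. f' p w > 0 \<longrightarrow> inner w n \<ge> 0"
  proof (intro allI impI)
    fix w assume lw: "f' p w > 0"
    have "((\<lambda>s. f (p + s *\<^sub>R w)) has_real_derivative f' p w) (at 0)"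
      by (rule line_deriv) (use der pb in simp)
    from DERIV_pos_inc_right[OF this lw] obtain dd where dd: "dd > 0"
      "\<forall>h>0. h < dd \<longrightarrow> f (p + 0 *\<^sub>R w) < f (p + (0 + h) *\<^sub>R w)" by blast
    define h where "h = min (dd/2) ((r1 - dist xb p) / (2 * (norm w + 1)))"
    have rp: "r1 - dist xb p > 0" using pb1 by simp
    have "(r1 - dist xb p) / (2 * (norm w + 1)) > 0"
    proof (rule divide_pos_pos[OF rp])
      show "0 < 2 * (norm w + 1)" by (smt (verit) norm_ge_zero)
    qed
    then have hp: "h > 0" "h < dd" using dd by (auto simp: h_def)
    have "h * norm w \<le> (r1 - dist xb p) / (2 * (norm w + 1)) * norm w"
      by (rule mult_right_mono) (auto simp: h_def)
    also have "\<dots> < r1 - dist xb p"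
    proof -
      have "(r1 - dist xb p) / (2 * (norm w + 1)) * norm w = (r1 - dist xb p) * (norm w / (2 * (norm w + 1)))"
        by simp
      also have "\<dots> < (r1 - dist xb p) * 1"
      proof (rule mult_strict_left_mono[OF _ rp])
        have K: "0 < 2 * (norm w + 1)" "norm w < 2 * (norm w + 1)" by (smt (verit) norm_ge_zero)+
        then show "norm w / (2 * (norm w + 1)) < 1" by (simp only: divide_less_eq_1_pos)
      qed
      finally show ?thesis by simp
    qed
    finally have hw: "h * norm w < r1 - dist xb p" .
    have "dist xb (p + h *\<^sub>R w) \<le> dist xb p + norm (h *\<^sub>R w)"
      by (metis dist_commute dist_norm dist_triangle2 add_diff_cancel_left')
    then have "p + h *\<^sub>R w \<in> ball xb r1" using hw hp by simp
    moreover have "f (p + h *\<^sub>R w) > 0" using dd(2) hp fp by simp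
    ultimately have "p + h *\<^sub>R w \<in> A" using pos interior_subset by blast
    then have "inner (h *\<^sub>R w) n \<ge> 0" using nrm by force
    then show "inner w n \<ge> 0" using hp by (simp add: zero_le_mult_iff)
  qed
  note LH = lin_halfspace[OF linp hs nn]
  have v0ne: "v0 \<noteq> 0"
  proof
    assume "v0 = 0"
    moreover have "xb \<in> ball xb r" using r1 by simp
    then have "linear (f' xb)" using der has_derivative_linear by blast
    ultimately have "f' xb v0 = 0" using linear_0 by blast
    then show False using v0 by simp
  qed
  have nv: "norm v0 > 0" using v0ne by simp
  have "\<bar>f' p v0 - f' xb v0\<bar> \<le> \<eta> * norm v0" using near pb by blast
  then have l1: "f' p v0 \<ge> 7/8" using v0 eta by linarith
  have "f' p v0 = inner v0 n * f' p n" using LH(1) by blast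
  also have "\<dots> \<le> norm v0 * f' p n"
  proof (rule mult_right_mono)
    show "inner v0 n \<le> norm v0" using norm_cauchy_schwarz[of v0 n] nn by simp
  qed (use LH(2) in simp)
  finally have l2: "norm v0 * f' p n \<ge> 7/8" using l1 by linarith
  define c where "c = f' p n - 2 * \<eta>"
  have "norm v0 * c \<ge> 7/8 - 2/8" using l2 eta by (simp add: c_def algebra_simps)
  then have "norm v0 * c > 0" by linarith
  then have cp: "c > 0" using nv by (simp add: zero_less_mult_iff)
  have slope: "\<forall>z\<in>ball xb r. f' z n \<ge> c"
  proof
    fix z assume z: "z \<in> ball xb r"
    have "\<bar>f' z n - f' xb n\<bar> \<le> \<eta> * norm n" using near z by blast
    moreover have "\<bar>f' p n - f' xb n\<bar> \<le> \<eta> * norm n" using near pb by blast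
    ultimately show "f' z n \<ge> c" using nn by (simp add: c_def abs_le_iff)
  qed
  define t where "t = (\<alpha> - 1) * d"
  have tp1: "t > 0" using al dp by (simp add: t_def)
  have "(\<alpha> - 1) * d \<le> 1 * d" using al dp by (intro mult_right_mono) auto
  then have tp: "t > 0" "t \<le> d" using tp1 by (auto simp: t_def)
  have "dist xb (p + t *\<^sub>R n) \<le> dist xb p + norm (t *\<^sub>R n)"
    by (metis dist_commute dist_norm dist_triangle2 add_diff_cancel_left')
  moreover have "norm (t *\<^sub>R n) = t" using nn tp by simp
  ultimately have ptb1: "p + t *\<^sub>R n \<in> ball xb r1"
    using dpx xd tp dle r1 by (simp add: dist_commute)
  have ptb: "p + t *\<^sub>R n \<in> ball xb r" using ptb1 r1 by auto
  have "f (p + t *\<^sub>R n) \<ge> f p + c * t" using mono_dir[OF der slope pb ptb] tp by simp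
  then have "f (p + t *\<^sub>R n) > 0" using fp mult_pos_pos[OF cp tp(1)] by linarith
  then have "p + t *\<^sub>R n \<in> interior A" using pos ptb1 by blast
  moreover have "p + t *\<^sub>R n = (1 - \<alpha>) *\<^sub>R x + \<alpha> *\<^sub>R p"
    using dp by (simp add: t_def n_def algebra_simps)
  ultimately show "(1 - \<alpha>) *\<^sub>R x + \<alpha> *\<^sub>R closest_point A x \<in> interior A" by (simp add: p_def)
qed
theorem lemma7:
  fixes A :: "'a::euclidean_space set" and xbar :: 'a
  assumes "closed A" and "convex A" and "interior A \<noteq> {}"
    and "C2_smooth_boundary_at A xbar TYPE('b::euclidean_space)"
    and "xbar \<in> frontier A"
  shows "\<exists>\<delta>>0. \<forall>x. norm (x - xbar) \<le> \<delta> \<and> x \<notin> A \<longrightarrow>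
           (\<forall>\<alpha>. 1 < \<alpha> \<and> \<alpha> \<le> 2 \<longrightarrow> relaxed_proj \<alpha> A x \<in> interior A)"
proof -
  note clA = assms(1) and cvA = assms(2) and intA = assms(3) and xbf = assms(5)
  obtain U and F :: "'a \<Rightarrow> 'b" where U: "open U" "xbar \<in> U" "C2_on U F"
    and sj: "\<forall>y\<in>U. F differentiable (at y) \<and> surj (frechet_derivative F (at y))"
    and FU: "frontier A \<inter> U = {y\<in>U. F y = 0}"
    using assms(4) unfolding C2_smooth_boundary_at_def by blast
  obtain F' :: "'a \<Rightarrow> ('a \<Rightarrow>\<^sub>L 'b)" and F'' :: "'a \<Rightarrow> ('a \<Rightarrow>\<^sub>L ('a \<Rightarrow>\<^sub>L 'b))"
    where dF: "\<forall>y\<in>U. (F has_derivative blinfun_apply (F' y)) (at y)"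
      and dF': "\<forall>y\<in>U. (F' has_derivative blinfun_apply (F'' y)) (at y)"
    using U(3) unfolding C2_on_def by blast
  have "blinfun_apply (F' xbar) = frechet_derivative F (at xbar)"
    using dF U(2) frechet_derivative_at by blast
  then have sj0: "surj (blinfun_apply (F' xbar))" using sj U(2) by simp
  define e :: 'b where "e = (SOME e. e \<in> Basis)"
  have eB: "e \<in> Basis" unfolding e_def by (rule someI_ex) (use nonempty_Basis in blast)
  have ee: "inner e e = 1" "norm e = 1" using eB by auto
  obtain v0 where v0: "blinfun_apply (F' xbar) v0 = e" using sj0 by (metis surjD)
  define f where "f = (\<lambda>y. inner (F y) e)"
  define f' where "f' = (\<lambda>z w. inner (blinfun_apply (F' z) w) e)"
  define \<eta> :: real where "\<eta> = 1 / (8 * (norm v0 + 1))"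
  have n8: "8 * (norm v0 + 1) > 0" "norm v0 + 1 > 0" "norm v0 \<le> norm v0 + 1" by (smt (verit) norm_ge_zero)+
  have etap: "\<eta> > 0" using n8 by (simp add: \<eta>_def)
  have eta8: "\<eta> * norm v0 \<le> 1/8"
  proof -
    have "\<eta> * norm v0 = (1/8) * (norm v0 / (norm v0 + 1))" by (simp add: \<eta>_def)
    also have "\<dots> \<le> (1/8) * 1"
    proof (rule mult_left_mono)
      show "norm v0 / (norm v0 + 1) \<le> 1" by (subst divide_le_eq_1_pos[OF n8(2)]) (rule n8(3))
    qed simp
    finally show ?thesis by simp
  qed
  have "continuous (at xbar) F'" using dF' U(2) has_derivative_continuous by blast
  then obtain r0 where r0: "r0 > 0" "\<forall>z. dist z xbar < r0 \<longrightarrow> dist (F' z) (F' xbar) < \<eta>"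
    unfolding continuous_at_eps_delta using etap by blast
  obtain r2 where r2: "r2 > 0" "ball xbar r2 \<subseteq> U" using U open_contains_ball by blast
  define r where "r = min r0 r2"
  have rp: "r > 0" using r0 r2 by (simp add: r_def)
  have rU: "ball xbar r \<subseteq> U" using r2 by (auto simp: r_def)
  have der: "\<forall>z\<in>ball xbar r. (f has_derivative f' z) (at z)"
  proof
    fix z assume "z \<in> ball xbar r"
    then have "z \<in> U" using rU by blast
    then have "(F has_derivative blinfun_apply (F' z)) (at z)" using dF by blast
    then show "(f has_derivative f' z) (at z)"
      unfolding f_def f'_def by (rule has_derivative_inner_left)
  qed
  have near: "\<forall>z\<in>ball xbar r. \<forall>w. \<bar>f' z w - f' xbar w\<bar> \<le> \<eta> * norm w"
  proof (intro ballI allI)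
    fix z w assume z: "z \<in> ball xbar r"
    have nz: "norm (F' z - F' xbar) \<le> \<eta>"
    proof -
      have "dist z xbar < r0" using z by (auto simp: r_def dist_commute)
      then have "dist (F' z) (F' xbar) < \<eta>" using r0 by blast
      then show ?thesis by (simp add: dist_norm)
    qed
    have "\<bar>f' z w - f' xbar w\<bar> = \<bar>inner (blinfun_apply (F' z - F' xbar) w) e\<bar>"
      by (simp add: f'_def blinfun.diff_left inner_diff_left)
    also have "\<dots> \<le> norm (blinfun_apply (F' z - F' xbar) w) * norm e" by (rule Cauchy_Schwarz_ineq2)
    also have "\<dots> \<le> norm (F' z - F' xbar) * norm w" using ee norm_blinfun by simp
    also have "\<dots> \<le> \<eta> * norm w" using nz by (simp add: mult_right_mono)
    finally show "\<bar>f' z w - f' xbar w\<bar> \<le> \<eta> * norm w" .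
  qed
  have fv0: "f' xbar v0 = 1" using v0 ee by (simp add: f'_def)
  have fr: "\<forall>z\<in>ball xbar r. z \<in> frontier A \<longrightarrow> f z = 0"
  proof (intro ballI impI)
    fix z assume "z \<in> ball xbar r" "z \<in> frontier A"
    then have "z \<in> frontier A \<inter> U" using rU by blast
    then have "F z = 0" using FU by blast
    then show "f z = 0" by (simp add: f_def)
  qed
  have slope: "\<forall>z\<in>ball xbar r. f' z v0 \<ge> 7/8"
  proof
    fix z assume "z \<in> ball xbar r"
    then have "\<bar>f' z v0 - f' xbar v0\<bar> \<le> \<eta> * norm v0" using near by blast
    then show "f' z v0 \<ge> 7/8" using fv0 eta8 by linarith
  qed
  obtain r1 where r1: "r1 > 0" "r1 \<le> r/2"
    and dis: "(\<forall>y\<in>ball xbar r1. f y > 0 \<longrightarrow> y \<in> interior A) \<or>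
              (\<forall>y\<in>ball xbar r1. f y < 0 \<longrightarrow> y \<in> interior A)"
    using dichotomy[OF der slope _ fr clA cvA intA xbf rp] by auto
  have r1r: "r1 \<le> r" using r1 rp by simp
  have goal: "\<exists>\<delta>>0. \<forall>x. norm (x - xbar) \<le> \<delta> \<and> x \<notin> A \<longrightarrow>
           (\<forall>\<alpha>. 1 < \<alpha> \<and> \<alpha> \<le> 2 \<longrightarrow> (1 - \<alpha>) *\<^sub>R x + \<alpha> *\<^sub>R closest_point A x \<in> interior A)"
  proof (cases "\<forall>y\<in>ball xbar r1. f y > 0 \<longrightarrow> y \<in> interior A")
    case True
    show ?thesis by (rule final[OF der near fv0 etap eta8 fr clA cvA xbf r1(1) r1r True])
  next
    case False
    then have pos: "\<forall>y\<in>ball xbar r1. - f y > 0 \<longrightarrow> y \<in> interior A" using dis by auto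
    have der': "\<forall>z\<in>ball xbar r. ((\<lambda>y. - f y) has_derivative (\<lambda>w. - f' z w)) (at z)"
      using der by (auto intro: has_derivative_minus)
    have near': "\<forall>z\<in>ball xbar r. \<forall>w. \<bar>- f' z w - - f' xbar w\<bar> \<le> \<eta> * norm w"
      using near by (metis abs_minus_commute minus_diff_eq minus_diff_minus)
    have fv0': "- f' xbar (- v0) = 1" using fv0 by (simp add: f'_def blinfun.minus_right)
    have eta8': "\<eta> * norm (- v0) \<le> 1/8" using eta8 by simp
    have fr': "\<forall>z\<in>ball xbar r. z \<in> frontier A \<longrightarrow> - f z = 0" using fr by simp
    show ?thesis by (rule final[OF der' near' fv0' etap eta8' fr' clA cvA xbf r1(1) r1r pos])
  qed
  then show ?thesis by (simp add: relaxed_proj_def proj_def)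
qed

end
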